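(* Let $d\geq 1$, $p\in[1,\infty)\setminus\{2\}$, and $\lambda_1,\dots,\lambda_d>0$. Then the equation $$\sum_{i=1}^{d}\frac{1-\beta^{3-\frac{1}{p}}\lambda_i}{1+\beta^{\frac{1}{p}}\lambda_i}=0$$ in the variable $\beta$ has exactly one positive root $\beta>0$. *)

theory Defs
  imports "HOL-Analysis.Analysis"
begin

end

theory Submission
  imports Defs
begin

lemma term_mono:
  fixes l x y a b :: real
  assumes l: "l > 0" and x: "0 < x" and xy: "x < y" and b: "0 < b" and ab: "b < a"
  shows "(1 - y powr a * l) / (1 + y powr b * l) < (1 - x powr a * l) / (1 + x powr b * l)"
proof -
  have y: "0 < y" using x xy by simp
  have h1: "x powr b < y powr b" using x xy b by (simp add: powr_less_mono2)
  have h2: "x powr a < y powr a" using x xy b ab by (simp add: powr_less_mono2)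
  have h3: "x powr (a-b) < y powr (a-b)" using x xy b ab by (simp add: powr_less_mono2)
  have ea: "x powr a = x powr b * x powr (a-b)" "y powr a = y powr b * y powr (a-b)"
    by (simp_all add: powr_add[symmetric])
  have pb: "0 < x powr b" "0 < y powr b" using x y by auto
  have h4: "x powr b * y powr b * x powr (a-b) < x powr b * y powr b * y powr (a-b)"
    using h3 pb by simp
  have h5: "x powr a * y powr b < x powr b * y powr a"
    using h4 unfolding ea by (simp add: algebra_simps)
  have key: "(1 - y powr a * l) * (1 + x powr b * l) < (1 - x powr a * l) * (1 + y powr b * l)"
  proof -
    have "(1 - x powr a * l) * (1 + y powr b * l) - (1 - y powr a * l) * (1 + x powr b * l)
      = l * (y powr b - x powr b) + l * (y powr a - x powr a) + l*l*(x powr b * y powr a - x powr a * y powr b)"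
      by (simp add: algebra_simps)
    moreover have "l * (y powr b - x powr b) > 0" using l h1 by simp
    moreover have "l * (y powr a - x powr a) > 0" using l h2 by simp
    moreover have "l*l*(x powr b * y powr a - x powr a * y powr b) > 0" using l h5 by simp
    ultimately show ?thesis by linarith
  qed
  have d1: "0 < 1 + y powr b * l" "0 < 1 + x powr b * l" using pb l by (auto intro: add_pos_pos)
  show ?thesis using key d1 by (simp add: divide_simps)
qed

theorem theorem2:
  fixes d :: nat and p :: real and lam :: "nat \<Rightarrow> real"
  assumes "d \<ge> 1" and "p \<ge> 1" and "p \<noteq> 2"
    and "\<And>i. i \<in> {1..d} \<Longrightarrow> lam i > 0"
  shows "\<exists>!\<beta>::real. \<beta> > 0 \<and>
    (\<Sum>i=1..d. (1 - \<beta> powr (3 - 1 / p) * lam i) / (1 + \<beta> powr (1 / p) * lam i)) = 0"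
proof -
  define a where "a = 3 - 1/p"
  define b where "b = 1/p"
  define g where "g = (\<lambda>\<beta>. \<Sum>i=1..d. (1 - \<beta> powr a * lam i) / (1 + \<beta> powr b * lam i))"
  have b0: "0 < b" using assms(2) by (simp add: b_def)
  have b1: "b \<le> 1" using assms(2) by (simp add: b_def)
  have ab: "b < a" using b1 by (simp add: a_def b_def)
  have a0: "0 < a" using ab b0 by simp
  have ne: "{1..d} \<noteq> {}" using assms(1) by simp
  have dec: "g y < g x" if "0 < x" "x < y" for x y
    unfolding g_def
    by (rule sum_strict_mono) (use ne that b0 ab assms(4) in \<open>auto intro: term_mono\<close>)
  define L where "L = (\<Sum>i=1..d. lam i)"
  define K where "K = (\<Sum>i=1..d. 1 / lam i)"
  have Lge: "lam i \<le> L" if "i \<in> {1..d}" for i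
    unfolding L_def by (rule member_le_sum) (use that assms(4) in \<open>auto intro: less_imp_le\<close>)
  have Kge: "1 / lam i \<le> K" if "i \<in> {1..d}" for i
    unfolding K_def by (rule member_le_sum) (use that assms(4) in \<open>auto intro: less_imp_le\<close>)
  have L0: "L > 0" using Lge assms(4) ne by (metis all_not_in_conv order_less_le_trans)
  have K0: "K > 0" using Kge assms(4) ne
    by (metis all_not_in_conv order_less_le_trans zero_less_divide_1_iff)
  define b1' where "b1' = (1/(2*L)) powr (1/a)"
  define b2' where "b2' = (2*K) powr (1/a)"
  have p1: "b1' > 0" "b2' > 0" using L0 K0 by (auto simp: b1'_def b2'_def)
  have e1: "b1' powr a = 1/(2*L)" using L0 a0 by (simp add: b1'_def powr_powr)
  have e2: "b2' powr a = 2*K" using K0 a0 by (simp add: b2'_def powr_powr)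
  have g1: "g b1' > 0"
    unfolding g_def
  proof (rule sum_pos)
    fix i assume i: "i \<in> {1..d}"
    have "b1' powr a * lam i \<le> 1/(2*L) * L" unfolding e1
      using Lge[OF i] L0 by (intro mult_left_mono) auto
    also have "\<dots> < 1" using L0 by simp
    finally have "0 < 1 - b1' powr a * lam i" by simp
    moreover have "0 < 1 + b1' powr b * lam i" using assms(4)[OF i] p1
      by (simp add: add_pos_nonneg)
    ultimately show "0 < (1 - b1' powr a * lam i) / (1 + b1' powr b * lam i)" by simp
  qed (use ne in auto)
  have g2': "g b2' < (\<Sum>i=1..d. 0)"
    unfolding g_def
  proof (rule sum_strict_mono)
    fix i assume i: "i \<in> {1..d}"
    have li: "lam i > 0" using assms(4)[OF i] .
    have "1 \<le> K * lam i" using Kge[OF i] li by (simp add: divide_simps)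
    hence "1 < b2' powr a * lam i" unfolding e2 by simp
    hence "1 - b2' powr a * lam i < 0" by simp
    moreover have "0 < 1 + b2' powr b * lam i" using li p1
      by (simp add: add_pos_nonneg)
    ultimately show "(1 - b2' powr a * lam i) / (1 + b2' powr b * lam i) < 0"
      by (simp add: divide_neg_pos)
  qed (use ne in auto)
  have g2: "g b2' < 0" using g2' by simp
  have lt: "b1' < b2'"
  proof (rule ccontr)
    assume "\<not> b1' < b2'"
    hence "b2' = b1' \<or> b2' < b1'" by auto
    thus False using dec[of b2' b1'] p1 g1 g2 by auto
  qed
  have pos: "1 + x powr b * lam i > 0" if "x > 0" "i \<in> {1..d}" for x i
    using that assms(4)[OF that(2)] by (simp add: add_pos_pos)
  have cont: "continuous_on {b1'..b2'} g"
    unfolding g_def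
    apply (intro continuous_intros)
    using pos p1 by (auto, smt (verit) atLeastAtMost_iff)
  obtain r where r: "b1' \<le> r" "r \<le> b2'" "g r = 0"
    using IVT2'[of g b2' 0 b1'] g1 g2 lt cont by auto
  have r0: "r > 0" using r p1 by auto
  have "\<exists>!\<beta>::real. \<beta> > 0 \<and> g \<beta> = 0"
  proof (rule ex1I[of _ r])
    show "r > 0 \<and> g r = 0" using r0 r by simp
  next
    fix y assume y: "y > 0 \<and> g y = 0"
    show "y = r"
    proof (rule ccontr)
      assume "y \<noteq> r"
      hence "y < r \<or> r < y" by auto
      thus False using dec[of y r] dec[of r y] y r0 r by auto
    qed
  qed
  thus ?thesis unfolding g_def a_def b_def .
qed

end
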